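(* Consider the 2-node network game with market maker payoff $\pi^M=W_{con}$. Suppose $a_1=a_2=a>0$, $c_1=c_2=c>0$, $b_1,b_2>0$ with $1<b_1/b_2\le 3$, and the line capacity $f_{12}$ satisfies $$\frac{a}{3b_1+2c}<f_{12}<\min\Big\{\frac{a}{b_2+2c},\ \frac{a}{b_1},\ f_0\Big\},$$ where $$f_0=\frac{ab_2\big[b_1+b_2+c(3-b_1/b_2)\big]}{b_1b_2(b_1+b_2)+b_1(b_1+5b_2)c+2(b_1+b_2)c^2}.$$ Then the game has no GNE.
   Context: 2-node network game. There are generators $G_1,G_2$. Generator $k$ chooses $q_k\ge 0$ and has profit $\pi^G_k=q_kp_k(q_k+r_k)-c_kq_k^2$, where $p_k(d)=a_k-b_kd$. The market maker chooses $r\in\mathbb{R}$ and sets $r_1=r$, $r_2=-r$, subject to $-q_1\le r\le q_2$ and $-f_{12}\le r\le f_{12}$. Node $k$ receives $q_k+r_k$. Consumer surplus objective. The market maker maximizes $$W_{con}(q,r)=\sum_{k=1}^2\Big(\int_0^{q_k+r_k}p_k(w)\,dw-(q_k+r_k)p_k(q_k+r_k)\Big).$$ GNE. A triple $(q_1^*,q_2^*,r^* )$ with $r^*$ feasible given $q^*$ is a GNE if both of the following hold: - each $q_k^*$ maximizes $\pi^G_k$ over $q_k\ge0$, given the other generator's quantity and $r^*$; - $r^*$ maximizes $W_{con}(q^*,\cdot)$ over the feasible set determined by $q^*$. *)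

theory Defs
  imports "HOL-Analysis.Analysis"
begin

definition price :: "real \<Rightarrow> real \<Rightarrow> real \<Rightarrow> real" where
  "price a b d = a - b * d"

text \<open>Generator profit: q p(q + r) - c q^2, where r is the net import at its node.\<close>
definition gen_profit :: "real \<Rightarrow> real \<Rightarrow> real \<Rightarrow> real \<Rightarrow> real \<Rightarrow> real" where
  "gen_profit a b c q r = q * price a b (q + r) - c * q\<^sup>2"

definition node_cs :: "real \<Rightarrow> real \<Rightarrow> real \<Rightarrow> real" where
  "node_cs a b x = integral {0..x} (\<lambda>w. price a b w) - x * price a b x"

text \<open>Market maker objective W_con, with r_1 = r, r_2 = -r.\<close>
definition W_con :: "real \<Rightarrow> real \<Rightarrow> real \<Rightarrow> real \<Rightarrow> real \<Rightarrow> real \<Rightarrow> real \<Rightarrow> real" where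
  "W_con a1 b1 a2 b2 q1 q2 r = node_cs a1 b1 (q1 + r) + node_cs a2 b2 (q2 + (- r))"

definition mm_feasible :: "real \<Rightarrow> real \<Rightarrow> real \<Rightarrow> real \<Rightarrow> bool" where
  "mm_feasible f q1 q2 r \<longleftrightarrow> - q1 \<le> r \<and> r \<le> q2 \<and> - f \<le> r \<and> r \<le> f"

definition is_GNE ::
  "real \<Rightarrow> real \<Rightarrow> real \<Rightarrow> real \<Rightarrow> real \<Rightarrow> real \<Rightarrow> real \<Rightarrow> real \<Rightarrow> real \<Rightarrow> real \<Rightarrow> bool" where
  "is_GNE a1 b1 c1 a2 b2 c2 f q1 q2 r \<longleftrightarrow>
     q1 \<ge> 0 \<and> q2 \<ge> 0 \<and> mm_feasible f q1 q2 r \<and>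
     (\<forall>q1'. q1' \<ge> 0 \<longrightarrow> gen_profit a1 b1 c1 q1' r \<le> gen_profit a1 b1 c1 q1 r) \<and>
     (\<forall>q2'. q2' \<ge> 0 \<longrightarrow> gen_profit a2 b2 c2 q2' (- r) \<le> gen_profit a2 b2 c2 q2 (- r)) \<and>
     (\<forall>r'. mm_feasible f q1 q2 r' \<longrightarrow> W_con a1 b1 a2 b2 q1 q2 r' \<le> W_con a1 b1 a2 b2 q1 q2 r)"

end

theory Submission
  imports Defs
begin

lemma node_cs_eq:
  assumes "x \<ge> 0"
  shows "node_cs a b x = b * x^2 / 2"
proof -
  have d: "\<And>w. ((\<lambda>w. a*w - b*w^2/2) has_vector_derivative (a - b*w)) (at w within {0..x})"
    unfolding has_real_derivative_iff_has_vector_derivative[symmetric]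
    by (auto intro!: derivative_eq_intros)
  have "((\<lambda>w. a - b*w) has_integral ((a*x - b*x^2/2) - (a*0 - b*0^2/2))) {0..x}"
    by (rule fundamental_theorem_of_calculus[OF assms]) (use d in auto)
  then have "integral {0..x} (\<lambda>w. price a b w) = a*x - b*x^2/2"
    unfolding price_def by (simp add: integral_unique)
  then show ?thesis unfolding node_cs_def price_def by (simp add: power2_eq_square algebra_simps)
qed

lemma W_eq:
  assumes "mm_feasible f q1 q2 r"
  shows "W_con a1 b1 a2 b2 q1 q2 r = b1*(q1+r)^2/2 + b2*(q2-r)^2/2"
  using assms unfolding W_con_def mm_feasible_def
  by (simp add: node_cs_eq)

lemma best_resp:
  fixes a b c q r :: real
  assumes bc: "b + c > 0" and pos: "a - b*r \<ge> 0"
    and opt: "\<forall>q'. q' \<ge> 0 \<longrightarrow> gen_profit a b c q' r \<le> gen_profit a b c q r"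
  shows "2*(b+c)*q = a - b*r"
proof -
  define qs where "qs = (a - b*r)/(2*(b+c))"
  have qs0: "qs \<ge> 0" unfolding qs_def using bc pos by simp
  have eq: "2*(b+c)*qs = a - b*r" unfolding qs_def using bc by simp
  have "gen_profit a b c qs r - gen_profit a b c q r = (b+c)*(q-qs)^2"
    unfolding gen_profit_def price_def
  proof -
    have "qs * (a - b * (qs + r)) - c * qs\<^sup>2 - (q * (a - b * (q + r)) - c * q\<^sup>2)
       = (qs - q)*(a - b*r) - (b+c)*(qs^2 - q^2)" by (simp add: algebra_simps power2_eq_square)
    also have "\<dots> = (qs - q)*(2*(b+c)*qs) - (b+c)*(qs^2 - q^2)" by (simp only: eq)
    also have "\<dots> = (b+c)*(q-qs)^2" by (simp add: algebra_simps power2_eq_square)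
    finally show "qs * (a - b * (qs + r)) - c * qs\<^sup>2 - (q * (a - b * (q + r)) - c * q\<^sup>2) = (b+c)*(q-qs)^2" .
  qed
  moreover have "gen_profit a b c qs r \<le> gen_profit a b c q r" using opt qs0 by blast
  ultimately have "(b+c)*(q-qs)^2 \<le> 0" by simp
  then have "(q-qs)^2 \<le> 0" using bc by (simp add: mult_le_0_iff)
  then have "q = qs" by simp
  then show ?thesis using eq by simp
qed

theorem lemma1:
  fixes a b1 b2 c f :: real
  assumes "a > 0" and "c > 0" and "b1 > 0" and "b2 > 0"
    and "1 < b1 / b2" and "b1 / b2 \<le> 3"
    and "a / (3 * b1 + 2 * c) < f"
    and "f < a / (b2 + 2 * c)" and "f < a / b1"
    and "f < a * b2 * (b1 + b2 + c * (3 - b1 / b2)) /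
             (b1 * b2 * (b1 + b2) + b1 * (b1 + 5 * b2) * c + 2 * (b1 + b2) * c\<^sup>2)"
  shows "\<not> (\<exists>q1 q2 r. is_GNE a b1 c a b2 c f q1 q2 r)"
proof
  assume "\<exists>q1 q2 r. is_GNE a b1 c a b2 c f q1 q2 r"
  then obtain q1 q2 r where G: "is_GNE a b1 c a b2 c f q1 q2 r" by blast
  note a0 = \<open>a > 0\<close> and c0 = \<open>c > 0\<close> and b10 = \<open>b1 > 0\<close> and b20 = \<open>b2 > 0\<close>
  have b12: "b2 < b1" using assms(5) b20 by (simp add: field_simps)
  define Den where "Den = b1 * b2 * (b1 + b2) + b1 * (b1 + 5 * b2) * c + 2 * (b1 + b2) * c\<^sup>2"
  define N where "N = b1*b2 + b2^2 + 3*b2*c - b1*c"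
  have Den0: "Den > 0" unfolding Den_def using b10 b20 c0 by (simp add: add_pos_pos)
  have N_eq: "a * b2 * (b1 + b2 + c * (3 - b1 / b2)) = a * N"
    unfolding N_def using b20 by (simp add: field_simps power2_eq_square)
  have fDen: "f * Den < a * N" using assms(10) Den0 unfolding N_eq Den_def[symmetric]
    by (simp add: pos_less_divide_eq)
  have f_lo: "a < f * (3*b1 + 2*c)" using assms(7) b10 c0 by (simp add: pos_divide_less_eq)
  have f_hi2: "f * (b2 + 2*c) < a" using assms(8) b20 c0 by (simp add: pos_less_divide_eq)
  have f_hi1: "f * b1 < a" using assms(9) b10 by (simp add: pos_less_divide_eq)
  have f0: "f > 0" using f_lo a0 b10 c0
    by (smt (verit) mult_nonpos_nonneg)
  have q1: "q1 \<ge> 0" and q2: "q2 \<ge> 0" and feas: "mm_feasible f q1 q2 r"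
    and opt1: "\<forall>q1'. q1' \<ge> 0 \<longrightarrow> gen_profit a b1 c q1' r \<le> gen_profit a b1 c q1 r"
    and opt2: "\<forall>q2'. q2' \<ge> 0 \<longrightarrow> gen_profit a b2 c q2' (- r) \<le> gen_profit a b2 c q2 (- r)"
    and optM: "\<forall>r'. mm_feasible f q1 q2 r' \<longrightarrow> W_con a b1 a b2 q1 q2 r' \<le> W_con a b1 a b2 q1 q2 r"
    using G unfolding is_GNE_def by auto
  have rb: "-q1 \<le> r" "r \<le> q2" "-f \<le> r" "r \<le> f" using feas unfolding mm_feasible_def by auto
  have br1: "b1 * r \<le> b1 * f" using rb(4) b10 by simp
  have "a - b1*r \<ge> 0" using br1 f_hi1 by (simp add: mult.commute)
  then have e1: "2*(b1+c)*q1 = a - b1*r"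
    by (intro best_resp[OF _ _ opt1]) (use b10 c0 in auto)
  have "-r \<le> f" using rb(3) by simp
  then have br2: "b2 * (-r) \<le> b2 * f" by (rule mult_left_mono) (use b20 in simp)
  have "f * b2 < a" using f_hi2 c0 f0 by (smt (verit) mult_pos_pos distrib_left)
  then have "a - b2*(-r) \<ge> 0" using br2 by (simp add: mult.commute)
  then have e2: "2*(b2+c)*q2 = a - b2*(-r)"
    by (intro best_resp[OF _ _ opt2]) (use b20 c0 in auto)
  define Wf where "Wf = (\<lambda>r'. b1*(q1+r')^2/2 + b2*(q2-r')^2/2)"
  have optW: "\<And>r'. mm_feasible f q1 q2 r' \<Longrightarrow> Wf r' \<le> Wf r"
    using optM W_eq feas unfolding Wf_def by metis
  define D where "D = b1*(q1+r) - b2*(q2-r)"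
  have Wdiff: "\<And>r'. Wf r' - Wf r = (r'-r)*(D + (b1+b2)*(r'-r)/2)"
    unfolding Wf_def D_def by (simp add: field_simps power2_eq_square)
  define U where "U = min q2 f"
  define L where "L = max (-q1) (-f)"
  have endpoint: "r = U \<or> r = L"
  proof (rule ccontr)
    assume "\<not> (r = U \<or> r = L)"
    then have rU: "r < U" and rL: "L < r" using rb unfolding U_def L_def by auto
    have fU: "mm_feasible f q1 q2 U" unfolding U_def mm_feasible_def using rb q1 q2 by auto
    have fL: "mm_feasible f q1 q2 L" unfolding L_def mm_feasible_def using rb q1 q2 by auto
    have "(U-r)*(D + (b1+b2)*(U-r)/2) \<le> 0" using optW[OF fU] Wdiff[of U] by simp
    then have "D + (b1+b2)*(U-r)/2 \<le> 0" using rU by (simp add: mult_le_0_iff)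
    moreover have "(b1+b2)*(U-r)/2 > 0" using rU b10 b20 by simp
    moreover have "(L-r)*(D + (b1+b2)*(L-r)/2) \<le> 0" using optW[OF fL] Wdiff[of L] by simp
    then have "D + (b1+b2)*(L-r)/2 \<ge> 0" using rL by (simp add: mult_le_0_iff)
    moreover have "(b1+b2)*(L-r)/2 < 0" using rL b10 b20 by (simp add: mult_pos_neg)
    ultimately show False by linarith
  qed
  have Wfeas: "\<And>r'. -q1 \<le> r' \<Longrightarrow> r' \<le> q2 \<Longrightarrow> -f \<le> r' \<Longrightarrow> r' \<le> f \<Longrightarrow> Wf r' \<le> Wf r"
    using optW unfolding mm_feasible_def by blast
  show False
  proof (cases "r = U")
    case True
    show False
    proof (cases "q2 \<le> f")
      case True
      with \<open>r = U\<close> have rq: "r = q2" unfolding U_def by simp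
      have "q2*(b2+2*c) = a" using e2 unfolding rq by (simp add: algebra_simps)
      then have "(q2 - f)*(b2+2*c) > 0" using f_hi2 by (simp add: algebra_simps)
      then have "q2 - f > 0" using b20 c0 by (simp add: zero_less_mult_iff)
      then show False using True by simp
    next
      case False
      with \<open>r = U\<close> have rf: "r = f" unfolding U_def by simp
      have e1': "2*(b1+c)*q1 = a - b1*f" using e1 rf by simp
      have e2': "2*(b2+c)*q2 = a + b2*f" using e2 rf by simp
      have "2*(b1+c)*q1 < 2*(b1+c)*f" using e1' f_lo by (simp add: algebra_simps)
      then have q1f: "q1 < f" using b10 c0 by simp
      have le: "Wf (-q1) \<le> Wf f" using Wfeas[of "-q1"] q1 q2 q1f rf by simp
      have idW: "Wf f - Wf (-q1) = (q1+f) * ((b1+b2)*(q1+f) - 2*b2*(q1+q2)) / 2"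
        unfolding Wf_def by (simp add: field_simps power2_eq_square)
      have id1: "2*(b1+c)*(b2+c)*(2*b2*(q1+q2) - (b1+b2)*(q1+f))
          = 2*b2*(b1+c)*(2*(b2+c)*q2) - (b1-b2)*(b2+c)*(2*(b1+c)*q1)
            - 2*(b1+b2)*(b1+c)*(b2+c)*f"
        by (simp add: algebra_simps)
      also have "\<dots> = 2*b2*(b1+c)*(a + b2*f) - (b1-b2)*(b2+c)*(a - b1*f)
            - 2*(b1+b2)*(b1+c)*(b2+c)*f" by (simp only: e1' e2')
      also have "\<dots> = a * N - f * Den" unfolding N_def Den_def
        by (simp add: algebra_simps power2_eq_square)
      finally have "2*(b1+c)*(b2+c)*(2*b2*(q1+q2) - (b1+b2)*(q1+f)) > 0" using fDen by simp
      then have pos: "2*b2*(q1+q2) - (b1+b2)*(q1+f) > 0"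
        by (rule zero_less_mult_pos) (use b10 b20 c0 in simp)
      have "(q1+f) * ((b1+b2)*(q1+f) - 2*b2*(q1+q2)) < 0"
        using pos q1 f0 by (simp add: mult_pos_neg)
      then show False using le idW by simp
    qed
  next
    case False
    with endpoint have rL: "r = L" by simp
    show False
    proof (cases "-f \<le> -q1")
      case True
      with rL have rq: "r = -q1" unfolding L_def by simp
      have "q1*(b1+2*c) = a" using e1 unfolding rq by (simp add: algebra_simps)
      have "Den - N*(b1+2*c) = 2*c*(b1-b2)*(b1+b2+2*c)" unfolding N_def Den_def
        by (simp add: algebra_simps power2_eq_square)
      also have "\<dots> \<ge> 0" using c0 b12 b10 b20 by simp
      finally have "N*(b1+2*c) \<le> Den" by simp
      then have "a*(N*(b1+2*c)) \<le> a*Den" using a0 by simp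
      moreover have "f*Den*(b1+2*c) < a*N*(b1+2*c)" using fDen b10 c0 by simp
      ultimately have "(f*(b1+2*c))*Den < a*Den" by (simp add: algebra_simps)
      then have "f*(b1+2*c) < a" using Den0 by simp
      moreover have "q1*(b1+2*c) \<le> f*(b1+2*c)" using True b10 c0 by simp
      ultimately show False using \<open>q1*(b1+2*c) = a\<close> by simp
    next
      case False
      with rL have rf: "r = -f" and q1f: "f < q1" unfolding L_def by auto
      have e1': "2*(b1+c)*q1 = a + b1*f" using e1 rf by simp
      have e2': "2*(b2+c)*q2 = a - b2*f" using e2 rf by simp
      show False
      proof (cases "f \<le> q2")
        case True
        have le: "Wf f \<le> Wf (-f)" using Wfeas[of f] True q1 q1f f0 rf by simp
        have idW: "Wf f - Wf (-f) = 2*f*(b1*q1 - b2*q2)"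
          unfolding Wf_def by (simp add: field_simps power2_eq_square)
        have "2*(b1+c)*(b2+c)*(b1*q1 - b2*q2) = b1*(b2+c)*(2*(b1+c)*q1) - b2*(b1+c)*(2*(b2+c)*q2)"
          by (simp add: algebra_simps)
        also have "\<dots> = b1*(b2+c)*(a + b1*f) - b2*(b1+c)*(a - b2*f)" by (simp only: e1' e2')
        also have "\<dots> = a*c*(b1-b2) + f*(b1^2*(b2+c) + b2^2*(b1+c))"
          by (simp add: algebra_simps power2_eq_square)
        also have "\<dots> > 0" using a0 c0 b12 b10 b20 f0 by (intro add_pos_pos mult_pos_pos) auto
        finally have "b1*q1 - b2*q2 > 0"
          by (rule zero_less_mult_pos) (use b10 b20 c0 in simp)
        then have "2*f*(b1*q1 - b2*q2) > 0" using f0 by simp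
        then show False using le idW by simp
      next
        case False
        have le: "Wf q2 \<le> Wf (-f)" using Wfeas[of q2] False q1 q2 f0 rf by simp
        have idW: "Wf q2 - Wf (-f) = (q2+f)*(b1*(2*q1+q2-f) - b2*(q2+f))/2"
          unfolding Wf_def by (simp add: field_simps power2_eq_square)
        have "b1*(q2+f) \<le> b1*(2*q1+q2-f)" using q1f b10 by simp
        moreover have "b2*(q2+f) < b1*(q2+f)" using b12 q2 f0 by (intro mult_strict_right_mono) auto
        ultimately have "b1*(2*q1+q2-f) - b2*(q2+f) > 0" by linarith
        then have "(q2+f)*(b1*(2*q1+q2-f) - b2*(q2+f)) > 0" using q2 f0 by simp
        then show False using le idW by simp
      qed
    qed
  qed
qed

end
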